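(* Let $\mathcal{X}$ be a convex subset of a normed space with norm $\|\cdot\|$ and dual norm $\|\cdot\|_*$, and $F:\mathcal{X}\times\mathcal{X}\to\mathbb{R}$ differentiable in its second argument such that for all $x,y,z\in\mathcal{X}$: $F(z,x)\ge F(z,y)+\langle\nabla_2F(z,y),x-y\rangle+\frac{\alpha}{2}\|x-y\|^2$; $|F(z,x)-F(z,y)|\le G_2\|x-y\|$; and $\|\nabla_2F(x,z)-\nabla_2F(y,z)\|_*\le\beta\|x-y\|$, where $\alpha>0$. Let $x_1\in\mathcal{X}$ and $x_{n+1}=\arg\min_{x\in\mathcal{X}}\sum_{k=1}^nF(x_k,x)$ for $n\ge1$. Let $\theta=\beta/\alpha$ and, for $n\ge2$, $S_n=\frac{1}{n-1}\sum_{k=1}^{n-1}\|x_n-x_k\|$. Then for all $n\ge2$, $\|x_{n+1}-x_n\|\le\frac{\theta S_n}{n}$.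
   Context: The iteration is the value aggregation algorithm AggreVaTe (Follow-the-Leader on the per-round costs $x\mapsto F(x_k,x)$); minimizers are assumed to exist. *)

theory Defs
  imports "HOL-Analysis.Analysis"
begin

end

theory Submission
  imports Defs
begin

lemma first_order_opt:
  fixes f :: "'a::real_normed_vector \<Rightarrow> real"
  assumes cv: "convex X" and der: "(f has_derivative f') (at y within X)"
    and yX: "y \<in> X" and zX: "z \<in> X" and mn: "\<forall>w\<in>X. f y \<le> f w"
  shows "f' (z - y) \<ge> 0"
proof (rule ccontr)
  assume neg: "\<not> f' (z - y) \<ge> 0"
  define h where "h = z - y"
  have hn: "h \<noteq> 0" using neg unfolding h_def
    using der has_derivative_bounded_linear linear_simps(3) bounded_linear.linear by fastforce
  have lin: "linear f'" using der has_derivative_bounded_linear bounded_linear.linear by blast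
  define e where "e = - f' h / (2 * norm h)"
  have e0: "e > 0"
  proof -
    have "f' h < 0" using neg unfolding h_def by simp
    moreover have "2 * norm h > 0" using hn by simp
    ultimately show ?thesis unfolding e_def by (simp add: divide_neg_pos)
  qed
  obtain d where d0: "d > 0" and dd: "\<forall>x'\<in>X. 0 < norm (x' - y) \<and> norm (x' - y) < d \<longrightarrow>
      norm (f x' - f y - f'(x' - y)) / norm (x' - y) < e"
    using der e0 unfolding has_derivative_within' by blast
  define t where "t = min 1 (d / (2 * norm h))"
  have t0: "t > 0" using d0 hn unfolding t_def by auto
  have t1: "t \<le> 1" unfolding t_def by auto
  have td: "t * norm h < d"
  proof -
    have "t * norm h \<le> d / (2 * norm h) * norm h" unfolding t_def
      by (intro mult_right_mono) auto
    also have "\<dots> = d / 2" using hn by auto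
    finally show ?thesis using d0 by linarith
  qed
  define x' where "x' = y + t *\<^sub>R h"
  have x'X: "x' \<in> X"
  proof -
    have "x' = (1 - t) *\<^sub>R y + t *\<^sub>R z" unfolding x'_def h_def by (simp add: algebra_simps)
    thus ?thesis using cv yX zX t0 t1 unfolding convex_def by auto
  qed
  have nx: "norm (x' - y) = t * norm h" unfolding x'_def using t0 by simp
  have fx: "f' (x' - y) = t * f' h" unfolding x'_def using lin by (simp add: linear_scale)
  have "norm (f x' - f y - f'(x' - y)) / norm (x' - y) < e"
    using dd x'X nx td t0 hn by auto
  hence "\<bar>f x' - f y - t * f' h\<bar> < e * (t * norm h)"
    using nx fx t0 hn by (simp add: divide_less_eq)
  also have "e * (t * norm h) = - t * f' h / 2" unfolding e_def using hn by (simp add: field_simps)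
  finally have "f x' - f y < t * f' h / 2" by linarith
  moreover have "t * f' h < 0" using t0 neg unfolding h_def by (simp add: mult_pos_neg)
  ultimately have "f x' < f y" by linarith
  thus False using mn x'X by fastforce
qed

theorem lemma2:
  fixes X :: "'a::real_normed_vector set"
    and F :: "'a \<Rightarrow> 'a \<Rightarrow> real"
    and D :: "'a \<Rightarrow> 'a \<Rightarrow> ('a \<Rightarrow>\<^sub>L real)"
    and x :: "nat \<Rightarrow> 'a"
    and \<alpha> \<beta> G\<^sub>2 :: real
  assumes convX: "convex X"
    and deriv: "\<And>z y. z \<in> X \<Longrightarrow> y \<in> X \<Longrightarrow>
                  (F z has_derivative blinfun_apply (D z y)) (at y within X)"
    and strong: "\<And>x y z. x \<in> X \<Longrightarrow> y \<in> X \<Longrightarrow> z \<in> X \<Longrightarrow>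
                  F z x \<ge> F z y + D z y (x - y) + \<alpha> / 2 * (norm (x - y))\<^sup>2"
    and lip: "\<And>x y z. x \<in> X \<Longrightarrow> y \<in> X \<Longrightarrow> z \<in> X \<Longrightarrow>
                  \<bar>F z x - F z y\<bar> \<le> G\<^sub>2 * norm (x - y)"
    and smooth: "\<And>x y z. x \<in> X \<Longrightarrow> y \<in> X \<Longrightarrow> z \<in> X \<Longrightarrow>
                  norm (D x z - D y z) \<le> \<beta> * norm (x - y)"
    and alpha_pos: "\<alpha> > 0"
    and x1: "x 1 \<in> X"
    and xmem: "\<And>n. n \<ge> 1 \<Longrightarrow> x (Suc n) \<in> X"
    and xmin: "\<And>n y. n \<ge> 1 \<Longrightarrow> y \<in> X \<Longrightarrow>
                  (\<Sum>k=1..n. F (x k) (x (Suc n))) \<le> (\<Sum>k=1..n. F (x k) y)"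
  shows "\<forall>n\<ge>2. norm (x (Suc n) - x n)
           \<le> (\<beta> / \<alpha>) * ((1 / real (n - 1)) * (\<Sum>k=1..n-1. norm (x n - x k))) / real n"
proof (intro allI impI)
  fix n :: nat assume n2: "n \<ge> 2"
  have xX: "\<And>k. k \<ge> 1 \<Longrightarrow> x k \<in> X"
  proof -
    fix k :: nat assume "k \<ge> 1"
    then show "x k \<in> X" using x1 xmem by (cases k; cases "k - 1") auto
  qed
  have opt: "\<And>m z. m \<ge> 1 \<Longrightarrow> z \<in> X \<Longrightarrow>
      (\<Sum>k=1..m. D (x k) (x (Suc m)) (z - x (Suc m))) \<ge> 0"
  proof -
    fix m :: nat and z assume m1: "m \<ge> 1" and zX: "z \<in> X"
    have "((\<lambda>w. \<Sum>k=1..m. F (x k) w) has_derivative (\<lambda>h. \<Sum>k=1..m. D (x k) (x (Suc m)) h))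
           (at (x (Suc m)) within X)"
      by (rule has_derivative_sum) (use deriv xX xmem m1 in auto)
    from first_order_opt[OF convX this xmem[OF m1] zX] xmin[OF m1] show
      "(\<Sum>k=1..m. D (x k) (x (Suc m)) (z - x (Suc m))) \<ge> 0" by blast
  qed
  obtain m where nm: "n = Suc m" and m1: "m \<ge> 1" using n2 by (cases n) auto
  define a where "a = x n"
  define b where "b = x (Suc n)"
  have aX: "a \<in> X" unfolding a_def using xX n2 by auto
  have bX: "b \<in> X" unfolding b_def using xmem n2 by auto
  define c where "c k = D (x k) a (a - b)" for k
  define T where "T = (\<Sum>k=1..m. norm (x n - x k))"
  have o1: "(\<Sum>k=1..m. c k) \<le> 0"
  proof -
    have "(\<Sum>k=1..m. D (x k) a (b - a)) \<ge> 0" using opt[OF m1 bX] unfolding a_def nm by simp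
    moreover have "D (x k) a (b - a) = - c k" for k
      unfolding c_def by (metis blinfun.minus_right minus_diff_eq)
    ultimately show ?thesis by (simp add: sum_negf)
  qed
  have o2: "(\<Sum>k=1..n. D (x k) b (a - b)) \<ge> 0"
    using opt[of n a] aX n2 unfolding b_def by auto
  have sc: "D (x k) a (b - a) + D (x k) b (a - b) + \<alpha> * (norm (a - b))\<^sup>2 \<le> 0" if "k \<ge> 1" for k
  proof -
    have "F (x k) b \<ge> F (x k) a + D (x k) a (b - a) + \<alpha> / 2 * (norm (a - b))\<^sup>2"
      using strong[of b a "x k"] aX bX xX that by (simp add: norm_minus_commute)
    moreover have "F (x k) a \<ge> F (x k) b + D (x k) b (a - b) + \<alpha> / 2 * (norm (a - b))\<^sup>2"
      using strong aX bX xX that by blast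
    ultimately show ?thesis by linarith
  qed
  have s3: "(\<Sum>k=1..n. D (x k) a (b - a)) + (\<Sum>k=1..n. D (x k) b (a - b)) + real n * (\<alpha> * (norm (a - b))\<^sup>2) \<le> 0"
  proof -
    have "(\<Sum>k=1..n. D (x k) a (b - a) + D (x k) b (a - b) + \<alpha> * (norm (a - b))\<^sup>2) \<le> (\<Sum>k=1..n. 0)"
      by (rule sum_mono) (use sc in auto)
    thus ?thesis by (simp add: sum.distrib)
  qed
  have neg: "D (x k) a (b - a) = - c k" for k
    unfolding c_def by (metis blinfun.minus_right minus_diff_eq)
  have P: "real n * (\<alpha> * (norm (a - b))\<^sup>2) \<le> (\<Sum>k=1..n. c k)"
    using s3 o2 by (simp add: neg sum_negf)
  have split: "(\<Sum>k=1..n. c k) = (\<Sum>k=1..m. c k) + c n"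
    unfolding nm by simp
  have ck: "c n - c k \<le> \<beta> * norm (x n - x k) * norm (a - b)" if "k \<ge> 1" for k
  proof -
    have "c n - c k = (D a a - D (x k) a) (a - b)" unfolding c_def a_def
      by (simp add: blinfun.diff_left)
    also have "\<dots> \<le> norm (D a a - D (x k) a) * norm (a - b)"
      by (metis abs_ge_self norm_blinfun order_trans real_norm_def)
    also have "\<dots> \<le> \<beta> * norm (x n - x k) * norm (a - b)"
      by (rule mult_right_mono) (use smooth aX xX that a_def in auto)
    finally show ?thesis .
  qed
  have sumck: "(\<Sum>k=1..m. c n - c k) \<le> \<beta> * T * norm (a - b)"
  proof -
    have "(\<Sum>k=1..m. c n - c k) \<le> (\<Sum>k=1..m. \<beta> * norm (x n - x k) * norm (a - b))"
      by (rule sum_mono) (use ck in auto)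
    also have "\<dots> = \<beta> * T * norm (a - b)" unfolding T_def
      by (simp add: sum_distrib_left sum_distrib_right mult.assoc)
    finally show ?thesis .
  qed
  have "(\<Sum>k=1..m. c n - c k) = real m * c n - (\<Sum>k=1..m. c k)"
    by (simp add: sum_subtractf)
  hence key: "real m * (real n * (\<alpha> * (norm (a - b))\<^sup>2)) \<le> \<beta> * T * norm (a - b)"
  proof -
    assume eq: "(\<Sum>k=1..m. c n - c k) = real m * c n - (\<Sum>k=1..m. c k)"
    have "real m * (real n * (\<alpha> * (norm (a - b))\<^sup>2)) \<le> real m * ((\<Sum>k=1..m. c k) + c n)"
      using P split by (intro mult_left_mono) auto
    also have "\<dots> = real n * (\<Sum>k=1..m. c k) + (\<Sum>k=1..m. c n - c k)"
      using eq nm by (simp add: algebra_simps)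
    also have "\<dots> \<le> (\<Sum>k=1..m. c n - c k)" using o1 by (simp add: mult_nonneg_nonpos)
    finally show ?thesis using sumck by linarith
  qed
  have bT: "\<beta> * T \<ge> 0"
  proof -
    have "\<beta> * norm (x n - x k) \<ge> 0" if "k \<ge> 1" for k
    proof -
      have "x n \<in> X" "x k \<in> X" using xX that n2 by auto
      hence "norm (D (x n) a - D (x k) a) \<le> \<beta> * norm (x n - x k)" using smooth aX by blast
      thus ?thesis using norm_ge_zero[of "D (x n) a - D (x k) a"] by linarith
    qed
    hence "(\<Sum>k=1..m. \<beta> * norm (x n - x k)) \<ge> 0" by (intro sum_nonneg) auto
    thus ?thesis unfolding T_def by (simp add: sum_distrib_left)
  qed
  have mpos: "real m > 0" "real n > 0" using m1 nm by auto
  have goal: "norm (a - b) \<le> (\<beta> / \<alpha>) * ((1 / real m) * T) / real n"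
  proof (cases "norm (a - b) = 0")
    case True
    then show ?thesis using bT alpha_pos mpos
      by (smt (verit) divide_nonneg_pos mult_nonneg_nonneg times_divide_eq_right divide_divide_eq_left
          mult.commute mult.left_commute)
  next
    case False
    hence np: "norm (a - b) > 0" by simp
    have "(real m * real n * \<alpha>) * norm (a - b) * norm (a - b) \<le> (\<beta> * T) * norm (a - b)"
      using key by (simp add: power2_eq_square mult_ac)
    hence "(real m * real n * \<alpha>) * norm (a - b) \<le> \<beta> * T"
      using np by (simp add: mult_le_cancel_right)
    hence "norm (a - b) \<le> \<beta> * T / (real m * real n * \<alpha>)"
      using mpos alpha_pos by (simp add: pos_le_divide_eq mult_ac)
    also have "\<dots> = (\<beta> / \<alpha>) * ((1 / real m) * T) / real n" by (simp add: field_simps)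
    finally show ?thesis .
  qed
  have "norm (x (Suc n) - x n) = norm (a - b)" unfolding a_def b_def by (simp add: norm_minus_commute)
  moreover have "n - 1 = m" using nm by simp
  ultimately show "norm (x (Suc n) - x n)
           \<le> (\<beta> / \<alpha>) * ((1 / real (n - 1)) * (\<Sum>k=1..n-1. norm (x n - x k))) / real n"
    using goal unfolding T_def by simp
qed

end
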